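(* Let $p$ be a prime and choose natural numbers $l,k$ with $3l \leq p+1$ and $k \leq l$. Let $\mathcal{A} \subseteq \mathbb{F}_p$ be a set of $k$ positions and $\mathcal{A}^c = \mathbb{F}_p \setminus \mathcal{A}$. Let $\mathcal{Q}$ be the qudit stabilizer code on $p-k$ qudits of dimension $p$ (indexed by $\mathcal{A}^c$) whose stabilizer group is generated by the operators $X^{v}$ for $v \in \mathsf{SRS}_{l,\mathcal{A}}$ and $Z^{w}$ for $w \in \mathsf{SRS}_{p-l,\mathcal{A}}$. Then $\mathcal{Q}$ is a $[[p-k,k,l-k]]$ quantum code, i.e. it acts on $p-k$ qudits, its code space has dimension $p^{k}$ (it encodes $k$ logical qudits), and its distance is $l-k$.
   Context: For a prime $p$, $X$ and $Z$ are the qudit shift and boost operators on $\mathbb{C}^p$: $X\ket{j}=\ket{j+1}$, $Z\ket{j}=\omega^j\ket{j}$ for $j \in \mathbb{F}_p$, with $\omega = e^{2\pi i/p}$; for $g \in \mathbb{F}_p^n$, $X^{g}=\bigotimes_i X^{g_i}$ and $Z^{g}=\bigotimes_i Z^{g_i}$. Let $\mathcal{R} = \mathbb{F}_p[x]/(x^p-x)$ (polynomials of degree at most $p-1$) and $\mathsf{ev}(\alpha) = (\alpha(u))_{u \in \mathbb{F}_p} \in \mathbb{F}_p^p$. For $l \leq p$, the Reed–Solomon code is $\mathsf{RS}_l = \operatorname{span}\{\mathsf{ev}(\alpha) : \alpha \in \mathcal{R}, \deg \alpha < l\}$. For $u \in \mathbb{F}_p^p$ and $\mathcal{B} \subseteq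 \mathbb{F}_p$, $u|_{\mathcal{B}}$ is the restriction of $u$ to the coordinates in $\mathcal{B}$. The shortened Reed–Solomon code is $\mathsf{SRS}_{r,\mathcal{A}} = \{u|_{\mathcal{A}^c} : u \in \mathsf{RS}_{r},\ u|_{\mathcal{A}} = 0\}$. The distance of a qudit stabilizer code is the minimum number of qudits on which a generalized Pauli operator (tensor product of powers of $X$ and $Z$, up to phase) acts nontrivially, among those that commute with all stabilizers but are not (up to phase) in the stabilizer group. *)

theory Defs
  imports "HOL-Analysis.Analysis" "HOL-Library.Function_Algebras"
begin

text \<open>The field F_p is represented by the naturals 0..<p with arithmetic mod p.
  Coordinate positions (elements of F_p) are naturals < p.  A vector in F_p^S (S a set of
  positions) is a function nat => nat with values < p on S and value 0 outside S.\<close>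

definition vecs :: "nat \<Rightarrow> nat set \<Rightarrow> (nat \<Rightarrow> nat) set" where
  "vecs p S = {u. (\<forall>i\<in>S. u i < p) \<and> (\<forall>i. i \<notin> S \<longrightarrow> u i = 0)}"

definition ev :: "nat \<Rightarrow> nat \<Rightarrow> (nat \<Rightarrow> nat) \<Rightarrow> (nat \<Rightarrow> nat)" where
  "ev p r c = (\<lambda>u. if u < p then (\<Sum>i<r. c i * u ^ i) mod p else 0)"

text \<open>Reed-Solomon code RS_r (r <= p): evaluations of polynomials of degree < r
  (this set is already closed under F_p-linear combinations, i.e. equals their span).\<close>
definition RS :: "nat \<Rightarrow> nat \<Rightarrow> (nat \<Rightarrow> nat) set" where
  "RS p r = {ev p r c | c. \<forall>i. c i < p}"

definition restr :: "nat set \<Rightarrow> (nat \<Rightarrow> nat) \<Rightarrow> (nat \<Rightarrow> nat)" where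
  "restr S u = (\<lambda>i. if i \<in> S then u i else 0)"

definition SRS :: "nat \<Rightarrow> nat \<Rightarrow> nat set \<Rightarrow> (nat \<Rightarrow> nat) set" where
  "SRS p r A = {restr ({0..<p} - A) u | u. u \<in> RS p r \<and> (\<forall>i\<in>A. u i = 0)}"

text \<open>Hilbert space of qudits indexed by S: complex functions on the computational basis
  F_p^S (vanishing outside it).\<close>
type_synonym state = "(nat \<Rightarrow> nat) \<Rightarrow> complex"

definition hilb :: "nat \<Rightarrow> nat set \<Rightarrow> state set" where
  "hilb p S = {\<psi>. \<forall>x. x \<notin> vecs p S \<longrightarrow> \<psi> x = 0}"

definition vsub :: "nat \<Rightarrow> (nat \<Rightarrow> nat) \<Rightarrow> (nat \<Rightarrow> nat) \<Rightarrow> (nat \<Rightarrow> nat)" where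
  "vsub p x a = (\<lambda>i. (x i + (p - a i mod p)) mod p)"

definition omega :: "nat \<Rightarrow> complex" where
  "omega p = cis (2 * pi / real p)"

text \<open>X^a: |x> |-> |x + a>, i.e. (X^a psi)(x) = psi(x - a).\<close>
definition Xop :: "nat \<Rightarrow> nat set \<Rightarrow> (nat \<Rightarrow> nat) \<Rightarrow> state \<Rightarrow> state" where
  "Xop p S a \<psi> = (\<lambda>x. if x \<in> vecs p S then \<psi> (vsub p x a) else 0)"

definition Zop :: "nat \<Rightarrow> nat set \<Rightarrow> (nat \<Rightarrow> nat) \<Rightarrow> state \<Rightarrow> state" where
  "Zop p S b \<psi> = (\<lambda>x. if x \<in> vecs p S then omega p ^ (\<Sum>i\<in>S. b i * x i) * \<psi> x else 0)"

text \<open>Generalized Pauli operator X^a Z^b (every generalized Pauli is of this form up to phase).\<close>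
definition pauli :: "nat \<Rightarrow> nat set \<Rightarrow> (nat \<Rightarrow> nat) \<Rightarrow> (nat \<Rightarrow> nat) \<Rightarrow> state \<Rightarrow> state" where
  "pauli p S a b = Xop p S a \<circ> Zop p S b"

definition pweight :: "nat set \<Rightarrow> (nat \<Rightarrow> nat) \<Rightarrow> (nat \<Rightarrow> nat) \<Rightarrow> nat" where
  "pweight S a b = card {i\<in>S. a i \<noteq> 0 \<or> b i \<noteq> 0}"

inductive_set gen_group :: "(state \<Rightarrow> state) set \<Rightarrow> (state \<Rightarrow> state) set" for G where
  gen_id: "id \<in> gen_group G"
| gen_mult: "g \<in> G \<Longrightarrow> h \<in> gen_group G \<Longrightarrow> g \<circ> h \<in> gen_group G"

definition css_gens :: "nat \<Rightarrow> nat set \<Rightarrow> (nat \<Rightarrow> nat) set \<Rightarrow> (nat \<Rightarrow> nat) set \<Rightarrow> (state \<Rightarrow> state) set" where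
  "css_gens p S CX CZ = {Xop p S v | v. v \<in> CX} \<union> {Zop p S w | w. w \<in> CZ}"

definition code_space :: "nat \<Rightarrow> nat set \<Rightarrow> (state \<Rightarrow> state) set \<Rightarrow> state set" where
  "code_space p S G = {\<psi> \<in> hilb p S. \<forall>g \<in> gen_group G. g \<psi> = \<psi>}"

definition cdim :: "state set \<Rightarrow> nat" where
  "cdim V = vector_space.dim (\<lambda>(c::complex) (\<psi>::state). (\<lambda>x. c * \<psi> x)) V"

definition logical_pauli :: "nat \<Rightarrow> nat set \<Rightarrow> (state \<Rightarrow> state) set
    \<Rightarrow> (nat \<Rightarrow> nat) \<Rightarrow> (nat \<Rightarrow> nat) \<Rightarrow> bool" where
  "logical_pauli p S G a b \<longleftrightarrow> a \<in> vecs p S \<and> b \<in> vecs p S \<and>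
     (\<forall>g \<in> gen_group G. \<forall>\<psi> \<in> hilb p S. pauli p S a b (g \<psi>) = g (pauli p S a b \<psi>)) \<and>
     \<not> (\<exists>c g. cmod c = 1 \<and> g \<in> gen_group G \<and>
            (\<forall>\<psi> \<in> hilb p S. pauli p S a b \<psi> = (\<lambda>x. c * g \<psi> x)))"

end

theory Submission
  imports Defs "HOL-Computational_Algebra.Polynomial" "HOL-Computational_Algebra.Primes"
begin


lemma root_lemma:
  fixes p :: nat and Q :: "int poly"
  assumes "prime p" "finite R" "R \<subseteq> {0..<p}" "degree Q < card R"
    "\<forall>u\<in>R. int p dvd poly Q (int u)"
  shows "\<forall>i. int p dvd coeff Q i"
  using assms(2-)
proof (induction R arbitrary: Q rule: finite_induct)
  case empty then show ?case by simp
next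
  case (insert a R Q)
  define Q1 where "Q1 = synthetic_div Q (int a)"
  have decomp: "Q = [:- int a, 1:] * Q1 + [:poly Q (int a):]"
    unfolding Q1_def using synthetic_div_correct'[of "int a" Q] by simp
  have pa: "int p dvd poly Q (int a)" using insert by simp
  show ?case
  proof (cases "R = {}")
    case True
    then have "degree Q = 0" using insert by simp
    then obtain c where "Q = [:c:]" using degree0_coeffs by blast
    then have "Q = [:poly Q (int a):]" by simp
    then show ?thesis using pa by (metis coeff_pCons_0 coeff_pCons_Suc coeff_0 dvd_0_right not0_implies_Suc)
  next
    case False
    have d1: "degree Q1 < card R"
    proof -
      have "card R > 0" using insert False by (simp add: card_gt_0_iff)
      then show ?thesis using insert unfolding Q1_def degree_synthetic_div by simp
    qed
    have r1: "\<forall>u\<in>R. int p dvd poly Q1 (int u)"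
    proof
      fix u assume u: "u \<in> R"
      have "poly Q (int u) = (int u - int a) * poly Q1 (int u) + poly Q (int a)"
        by (subst decomp) (simp add: algebra_simps)
      then have "int p dvd (int u - int a) * poly Q1 (int u)"
        using insert u pa by (metis dvd_add_right_iff add.commute insert_iff)
      moreover have "\<not> int p dvd (int u - int a)"
      proof
        assume "int p dvd (int u - int a)"
        moreover have "u < p" "a < p" using insert u by auto
        moreover have "u \<noteq> a" using insert u by auto
        ultimately show False
          using dvd_imp_le_int[of "int u - int a" "int p"] by auto
      qed
      moreover have "prime (int p)" using assms(1) by simp
      ultimately show "int p dvd poly Q1 (int u)" by (meson prime_dvd_mult_iff)
    qed
    have IH: "\<forall>i. int p dvd coeff Q1 i" using insert d1 r1 by auto
    show ?thesis
    proof
      fix i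
      have "coeff Q i = coeff ([:- int a, 1:] * Q1) i + coeff [:poly Q (int a):] i"
        by (subst decomp) simp
      also have "coeff ([:- int a, 1:] * Q1) i = - int a * coeff Q1 i + (case i of 0 \<Rightarrow> 0 | Suc j \<Rightarrow> coeff Q1 j)"
        by (simp add: mult_pCons_left coeff_pCons split: nat.split)
      finally show "int p dvd coeff Q i" using IH pa
        by (auto simp: coeff_pCons split: nat.split)
    qed
  qed
qed

lemma dvd_diff_lt:
  fixes p u a :: nat
  assumes "int p dvd (int u - int a)" "u < p" "a < p"
  shows "u = a"
  using assms dvd_imp_le_int[of "int u - int a" "int p"] by (cases "u = a") auto

definition cpoly :: "nat \<Rightarrow> (nat \<Rightarrow> nat) \<Rightarrow> int poly" where
  "cpoly r c = (\<Sum>i<r. monom (int (c i)) i)"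

lemma coeff_cpoly: "coeff (cpoly r c) j = (if j < r then int (c j) else 0)"
  unfolding cpoly_def coeff_sum coeff_monom by (simp add: sum.delta)

lemma poly_cpoly: "poly (cpoly r c) x = (\<Sum>i<r. int (c i) * x ^ i)"
  unfolding cpoly_def poly_sum poly_monom by simp

lemma degree_cpoly: "degree (cpoly r c) \<le> r - 1"
  by (rule degree_le) (auto simp: coeff_cpoly)

lemma int_ev: "u < p \<Longrightarrow> int (ev p r c u) = poly (cpoly r c) (int u) mod int p"
  unfolding ev_def poly_cpoly by (simp add: of_nat_mod)

lemma sum_mod_coeff:
  fixes f g :: "nat \<Rightarrow> int"
  shows "(\<Sum>i\<in>I. (f i mod m) * g i) mod m = (\<Sum>i\<in>I. f i * g i) mod m"
proof -
  have "(\<Sum>i\<in>I. (f i mod m) * g i) mod m = (\<Sum>i\<in>I. ((f i mod m) * g i) mod m) mod m"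
    by (simp add: mod_sum_eq)
  also have "\<dots> = (\<Sum>i\<in>I. (f i * g i) mod m) mod m"
    by (simp add: mod_mult_left_eq)
  also have "\<dots> = (\<Sum>i\<in>I. f i * g i) mod m"
    by (simp add: mod_sum_eq)
  finally show ?thesis .
qed

lemma poly_as_sum:
  fixes Q :: "'a::comm_semiring_1 poly"
  assumes "degree Q < r"
  shows "poly Q x = (\<Sum>i<r. coeff Q i * x ^ i)"
proof -
  have "poly Q x = (\<Sum>i\<le>degree Q. coeff Q i * x ^ i)" by (rule poly_altdef)
  also have "\<dots> = (\<Sum>i<r. coeff Q i * x ^ i)"
  proof (rule sum.mono_neutral_left)
    show "\<forall>i\<in>{..<r} - {..degree Q}. coeff Q i * x ^ i = 0" by (auto simp: coeff_eq_0)
  qed (use assms in auto)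
  finally show ?thesis .
qed

lemma vecs_lessThan_0: "c \<in> vecs p {..<0} \<Longrightarrow> c = (\<lambda>_. 0)"
  unfolding vecs_def by auto

lemma inj_ev:
  assumes "prime p" "finite R" "R \<subseteq> {0..<p}" "r \<le> card R"
  shows "inj_on (\<lambda>c. restr R (ev p r c)) (vecs p {..<r})"
proof (rule inj_onI)
  fix c c' assume c: "c \<in> vecs p {..<r}" and c': "c' \<in> vecs p {..<r}"
    and eq: "restr R (ev p r c) = restr R (ev p r c')"
  show "c = c'"
  proof (cases "r = 0")
    case True then show ?thesis using c c' vecs_lessThan_0 by auto
  next
    case False
    define Q where "Q = cpoly r c - cpoly r c'"
    have "degree Q \<le> r - 1" unfolding Q_def
      using degree_diff_le_max[of "cpoly r c" "cpoly r c'"] degree_cpoly[of r c] degree_cpoly[of r c'] by simp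
    then have dQ: "degree Q < card R" using False assms by linarith
    have "\<forall>u\<in>R. int p dvd poly Q (int u)"
    proof
      fix u assume u: "u \<in> R"
      then have "u < p" using assms by auto
      have "ev p r c u = ev p r c' u" using eq u unfolding restr_def by metis
      then have "poly (cpoly r c) (int u) mod int p = poly (cpoly r c') (int u) mod int p"
        using int_ev[OF \<open>u < p\<close>] by metis
      then show "int p dvd poly Q (int u)" unfolding Q_def by (simp add: mod_eq_dvd_iff)
    qed
    then have dv: "\<forall>i. int p dvd coeff Q i" using root_lemma[OF assms(1-3) dQ] by blast
    show ?thesis
    proof
      fix j show "c j = c' j"
      proof (cases "j < r")
        case True
        then have "int p dvd int (c j) - int (c' j)" using dv[rule_format, of j]
          unfolding Q_def by (simp add: coeff_cpoly)
        moreover have "c j < p" "c' j < p" using c c' True unfolding vecs_def by auto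
        ultimately show ?thesis using dvd_diff_lt by blast
      next
        case False then show ?thesis using c c' unfolding vecs_def by auto
      qed
    qed
  qed
qed

lemma vanish_poly:
  assumes "prime p" "finite B" "B \<subseteq> {0..<p}" "card B < r"
  shows "\<exists>c\<in>vecs p {..<r}. \<forall>u<p. int (ev p r c u) = (\<Prod>j\<in>B. int u - int j) mod int p"
proof -
  define Q where "Q = (\<Prod>j\<in>B. [:- int j, 1:])"
  have "degree Q \<le> card B" unfolding Q_def
    using degree_prod_sum_le[OF assms(2), of "\<lambda>j. [:- int j, 1:]"] by simp
  then have dQ: "degree Q < r" using assms by linarith
  have pQ: "poly Q x = (\<Prod>j\<in>B. x - int j)" for x unfolding Q_def by (simp add: poly_prod)
  define c where "c = (\<lambda>i. if i < r then nat (coeff Q i mod int p) else 0)"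
  have pp: "p > 0" using assms prime_gt_0_nat by blast
  have cv: "c \<in> vecs p {..<r}" unfolding vecs_def c_def using pp
    by (auto simp: nat_less_iff)
  moreover have "\<forall>u<p. int (ev p r c u) = (\<Prod>j\<in>B. int u - int j) mod int p"
  proof (intro allI impI)
    fix u assume u: "u < p"
    have "int (ev p r c u) = (\<Sum>i<r. int (c i) * int u ^ i) mod int p"
      using int_ev[OF u] poly_cpoly by simp
    also have "\<dots> = (\<Sum>i<r. (coeff Q i mod int p) * int u ^ i) mod int p"
      using pp by (intro arg_cong2[where f="(mod)"] sum.cong) (auto simp: c_def)
    also have "\<dots> = (\<Sum>i<r. coeff Q i * int u ^ i) mod int p" by (rule sum_mod_coeff)
    also have "\<dots> = poly Q (int u) mod int p" using poly_as_sum[OF dQ] by simp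
    finally show "int (ev p r c u) = (\<Prod>j\<in>B. int u - int j) mod int p" using pQ by simp
  qed
  ultimately show ?thesis by blast
qed

lemma vanish_poly':
  assumes "prime p" "finite B" "B \<subseteq> {0..<p}" "card B < r"
  shows "\<exists>c\<in>vecs p {..<r}. (\<forall>u\<in>B. ev p r c u = 0) \<and> (\<forall>u<p. u \<notin> B \<longrightarrow> ev p r c u \<noteq> 0)"
proof -
  obtain c where c: "c \<in> vecs p {..<r}"
    and e: "\<forall>u<p. int (ev p r c u) = (\<Prod>j\<in>B. int u - int j) mod int p"
    using vanish_poly[OF assms] by blast
  have "ev p r c u = 0" if "u \<in> B" for u
  proof -
    have "u < p" using that assms by auto
    moreover have "(\<Prod>j\<in>B. int u - int j) = 0"
      using assms(2) that by (simp add: prod_zero_iff)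
    ultimately show ?thesis using e by fastforce
  qed
  moreover have "ev p r c u \<noteq> 0" if "u < p" "u \<notin> B" for u
  proof
    assume "ev p r c u = 0"
    then have "int p dvd (\<Prod>j\<in>B. int u - int j)" using e[rule_format, OF that(1)] by (simp add: dvd_eq_mod_eq_0)
    then obtain j where "j \<in> B" "int p dvd int u - int j"
      using prime_dvd_prod_iff[of B "int p"] assms by auto
    moreover have "j < p" using \<open>j \<in> B\<close> assms by auto
    ultimately have "u = j" using dvd_diff_lt that by blast
    then show False using that \<open>j \<in> B\<close> by simp
  qed
  ultimately show ?thesis using c by blast
qed



lemma omega_pow_eq_1:
  assumes "p > 0"
  shows "omega p ^ m = 1 \<longleftrightarrow> p dvd m"
proof -
  have e: "omega p ^ m = cis (2 * pi * (real m / real p))"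
  proof -
    have "omega p ^ m = cis (real m * (2 * pi / real p))" by (simp add: omega_def Complex.DeMoivre)
    then show ?thesis by (simp add: field_simps)
  qed
  show ?thesis
  proof
    assume "p dvd m"
    then obtain t where "m = p * t" by blast
    then have "real m / real p = real t" using assms by simp
    then show "omega p ^ m = 1" using e by simp
  next
    assume "omega p ^ m = 1"
    then have "exp (\<i> * complex_of_real (2 * pi * (real m / real p))) = 1"
      using e by (simp add: cis_conv_exp)
    then obtain n :: int where n: "2 * pi * (real m / real p) = of_int (2 * n) * pi"
      unfolding exp_eq_1 by auto
    then have "(real m / real p) * (2 * pi) = of_int n * (2 * pi)" by (simp add: algebra_simps)
    moreover have "2 * pi \<noteq> (0::real)" by simp
    ultimately have "real m / real p = of_int n" by (meson mult_right_cancel)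
    then have "real m = of_int n * real p" using assms by (simp add: field_simps)
    then have "int m = n * int p" by (metis of_int_eq_iff of_int_mult of_int_of_nat_eq)
    then have "int p dvd int m" by simp
    then show "p dvd m" by simp
  qed
qed

lemma exists_nonroot:
  assumes "prime p" "0 < m" "m < p - 1"
  shows "\<exists>g. 0 < g \<and> g < p \<and> \<not> int p dvd int g ^ m - 1"
proof (rule ccontr)
  assume "\<not> ?thesis"
  then have all: "\<forall>u\<in>{1..<p}. int p dvd poly (monom 1 m - 1) (int u)"
    by (auto simp: poly_monom)
  have "degree (monom (1::int) m - 1) \<le> m"
    using degree_diff_le_max[of "monom (1::int) m" 1] degree_monom_le[of "1::int" m] by simp
  then have "degree (monom (1::int) m - 1) < card {1..<p}" using assms by simp
  from root_lemma[OF assms(1) _ _ this all] have "\<forall>i. int p dvd coeff (monom 1 m - 1) i" by auto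
  then have "int p dvd coeff (monom 1 m - 1) m" by blast
  then have "int p dvd 1" using assms by simp
  then show False using assms by (simp add: prime_gt_1_nat)
qed

lemma sum_pow_mod:
  fixes f :: "nat \<Rightarrow> int"
  shows "(\<Sum>i\<in>I. (f i mod m) ^ k) mod m = (\<Sum>i\<in>I. f i ^ k) mod m"
proof -
  have "(\<Sum>i\<in>I. (f i mod m) ^ k) mod m = (\<Sum>i\<in>I. ((f i mod m) ^ k) mod m) mod m"
    by (simp add: mod_sum_eq)
  also have "\<dots> = (\<Sum>i\<in>I. (f i ^ k) mod m) mod m"
    by (simp add: power_mod)
  also have "\<dots> = (\<Sum>i\<in>I. f i ^ k) mod m"
    by (simp add: mod_sum_eq)
  finally show ?thesis .
qed

lemma power_sum_dvd:
  assumes "prime p" "m < p - 1"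
  shows "int p dvd (\<Sum>u<p. int u ^ m)"
proof (cases "m = 0")
  case True then show ?thesis by simp
next
  case False
  obtain g where g: "0 < g" "g < p" "\<not> int p dvd int g ^ m - 1"
    using exists_nonroot[OF assms(1) _ assms(2)] False by auto
  have pp: "p > 0" using assms prime_gt_0_nat by blast
  define h where "h = (\<lambda>u. g * u mod p)"
  have inj: "inj_on h {..<p}"
  proof (rule inj_onI)
    fix u v assume u: "u \<in> {..<p}" and v: "v \<in> {..<p}" and e: "h u = h v"
    then have "int (g * u) mod int p = int (g * v) mod int p" unfolding h_def by (metis of_nat_mod)
    then have "int p dvd int (g * u) - int (g * v)" by (simp add: mod_eq_dvd_iff)
    then have "int p dvd int g * (int u - int v)" by (simp add: right_diff_distrib)
    moreover have "\<not> int p dvd int g" using g dvd_diff_lt[of p g 0] by auto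
    ultimately have "int p dvd int u - int v" using assms(1) by (simp add: prime_dvd_mult_iff)
    then show "u = v" using u v dvd_diff_lt by auto
  qed
  have img: "h ` {..<p} = {..<p}"
    by (rule endo_inj_surj) (use inj pp in \<open>auto simp: h_def\<close>)
  define S where "S = (\<Sum>u<p. int u ^ m)"
  have "S = (\<Sum>u<p. int (h u) ^ m)"
    using sum.reindex[OF inj, of "\<lambda>u. int u ^ m"] img by (simp add: S_def o_def)
  also have "\<dots> = (\<Sum>u<p. (int (g * u) mod int p) ^ m)"
    by (simp add: h_def of_nat_mod)
  finally have "S mod int p = (\<Sum>u<p. (int (g * u) mod int p) ^ m) mod int p" by simp
  also have "\<dots> = (\<Sum>u<p. (int (g * u)) ^ m) mod int p"
    by (rule sum_pow_mod)
  also have "\<dots> = (int g ^ m * S) mod int p"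
    by (simp add: S_def sum_distrib_left power_mult_distrib)
  finally have "int p dvd S - int g ^ m * S" by (simp add: mod_eq_dvd_iff)
  moreover have "(int g ^ m - 1) * S = - (S - int g ^ m * S)" by (simp add: algebra_simps)
  ultimately have "int p dvd (int g ^ m - 1) * S" by (simp add: dvd_diff_commute)
  then show ?thesis using g assms(1) by (simp add: prime_dvd_mult_iff S_def)
qed

lemma sum_mod_mult:
  fixes f g :: "nat \<Rightarrow> int"
  shows "(\<Sum>i\<in>I. (f i mod m) * (g i mod m)) mod m = (\<Sum>i\<in>I. f i * g i) mod m"
proof -
  have "(\<Sum>i\<in>I. (f i mod m) * (g i mod m)) mod m = (\<Sum>i\<in>I. ((f i mod m) * (g i mod m)) mod m) mod m"
    by (simp add: mod_sum_eq)
  also have "\<dots> = (\<Sum>i\<in>I. (f i * g i) mod m) mod m"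
    by (simp add: mod_mult_eq)
  also have "\<dots> = (\<Sum>i\<in>I. f i * g i) mod m"
    by (simp add: mod_sum_eq)
  finally show ?thesis .
qed

lemma ortho:
  assumes "prime p" "l + r \<le> p"
  shows "int p dvd (\<Sum>u<p. int (ev p l c u) * int (ev p r d u))"
proof -
  define E where "E u = (\<Sum>i<l. int (c i) * int u ^ i)" for u
  define F where "F u = (\<Sum>j<r. int (d j) * int u ^ j)" for u
  have "(\<Sum>u<p. int (ev p l c u) * int (ev p r d u)) = (\<Sum>u<p. (E u mod int p) * (F u mod int p))"
    by (rule sum.cong) (simp_all add: int_ev poly_cpoly E_def F_def)
  then have eq: "(\<Sum>u<p. int (ev p l c u) * int (ev p r d u)) mod int p = (\<Sum>u<p. E u * F u) mod int p"
    using sum_mod_mult by simp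
  have EF: "E u * F u = (\<Sum>i<l. \<Sum>j<r. int (c i) * int (d j) * int u ^ (i + j))" for u
    unfolding E_def F_def sum_product by (intro sum.cong refl) (simp add: power_add mult_ac)
  have "(\<Sum>u<p. E u * F u) = (\<Sum>u<p. \<Sum>i<l. \<Sum>j<r. int (c i) * int (d j) * int u ^ (i + j))"
    using EF by simp
  also have "\<dots> = (\<Sum>i<l. \<Sum>u<p. \<Sum>j<r. int (c i) * int (d j) * int u ^ (i + j))"
    by (rule sum.swap)
  also have "\<dots> = (\<Sum>i<l. \<Sum>j<r. \<Sum>u<p. int (c i) * int (d j) * int u ^ (i + j))"
    by (intro sum.cong refl sum.swap)
  also have "\<dots> = (\<Sum>i<l. \<Sum>j<r. int (c i) * int (d j) * (\<Sum>u<p. int u ^ (i + j)))"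
    by (simp add: sum_distrib_left)
  finally have S: "(\<Sum>u<p. E u * F u) = \<dots>" .
  have "int p dvd (\<Sum>i<l. \<Sum>j<r. int (c i) * int (d j) * (\<Sum>u<p. int u ^ (i + j)))"
  proof (rule dvd_sum, rule dvd_sum)
    fix i j assume "i \<in> {..<l}" "j \<in> {..<r}"
    then have "i + j < p - 1" using assms by auto
    then have "int p dvd (\<Sum>u<p. int u ^ (i + j))" using power_sum_dvd assms by blast
    then show "int p dvd int (c i) * int (d j) * (\<Sum>u<p. int u ^ (i + j))" by (rule dvd_mult)
  qed
  then have "int p dvd (\<Sum>u<p. E u * F u)" using S by simp
  then show ?thesis using eq by (simp add: dvd_eq_mod_eq_0)
qed



definition trunc :: "nat \<Rightarrow> (nat \<Rightarrow> nat) \<Rightarrow> nat \<Rightarrow> nat" where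
  "trunc r c = (\<lambda>i. if i < r then c i else 0)"

lemma int_vsub: "p > 0 \<Longrightarrow> int (vsub p x y i) = (int (x i) - int (y i)) mod int p"
proof -
  assume p: "p > 0"
  have lt: "y i mod p < p" using p by simp
  have "int (vsub p x y i) = (int (x i) + int (p - y i mod p)) mod int p"
    unfolding vsub_def by (metis of_nat_add of_nat_mod)
  also have "int (p - y i mod p) = int p - int (y i mod p)" using lt by (simp add: of_nat_diff)
  finally have "int (vsub p x y i) = (int (x i) + (int p - int (y i mod p))) mod int p" .
  also have "\<dots> = (int (x i) - int (y i) mod int p + int p) mod int p"
    by (simp add: of_nat_mod algebra_simps)
  also have "\<dots> = (int (x i) - int (y i) mod int p) mod int p" by simp
  also have "\<dots> = (int (x i) - int (y i)) mod int p" by (simp add: mod_diff_right_eq)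
  finally show ?thesis .
qed

lemma vsub_lt: "p > 0 \<Longrightarrow> vsub p x y i < p"
  unfolding vsub_def by simp

lemma vsub_zero_zero: "x i = 0 \<Longrightarrow> y i = 0 \<Longrightarrow> vsub p x y i = 0"
  unfolding vsub_def by simp

lemma vsub_vecs: "p > 0 \<Longrightarrow> x \<in> vecs p S \<Longrightarrow> y \<in> vecs p S \<Longrightarrow> vsub p x y \<in> vecs p S"
  unfolding vecs_def using vsub_lt vsub_zero_zero by blast

lemma vsub_same: "p > 0 \<Longrightarrow> x i < p \<Longrightarrow> vsub p x x i = 0"
  unfolding vsub_def by simp

lemma vsub_right0: "p > 0 \<Longrightarrow> x i < p \<Longrightarrow> y i = 0 \<Longrightarrow> vsub p x y i = x i"
  unfolding vsub_def by simp

lemma vsub_vsub: "p > 0 \<Longrightarrow> x i < p \<Longrightarrow> y i < p \<Longrightarrow> vsub p x (vsub p x y) i = y i"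
proof -
  assume p: "p > 0" and a: "x i < p" "y i < p"
  have "int (vsub p x (vsub p x y) i) = (int (x i) - (int (x i) - int (y i)) mod int p) mod int p"
    using int_vsub[OF p] by simp
  also have "\<dots> = int (y i) mod int p" by (simp add: mod_diff_right_eq)
  also have "\<dots> = int (y i)" using a by simp
  finally show ?thesis by simp
qed

lemma vsub_zero_imp_eq: "p > 0 \<Longrightarrow> x i < p \<Longrightarrow> y i < p \<Longrightarrow> vsub p x y i = 0 \<Longrightarrow> x i = y i"
proof -
  assume p: "p > 0" and a: "x i < p" "y i < p" and z: "vsub p x y i = 0"
  have "(int (x i) - int (y i)) mod int p = 0" using int_vsub[OF p, of x y i] z by simp
  then have "int p dvd int (x i) - int (y i)" by (simp add: dvd_eq_mod_eq_0)
  then show ?thesis using dvd_diff_lt a by blast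
qed

lemma restr_vsub: "restr S (vsub p u v) = vsub p (restr S u) (restr S v)"
  unfolding restr_def vsub_def by auto

lemma ev_lt: "p > 0 \<Longrightarrow> ev p r c u < p"
  unfolding ev_def by simp

lemma ev_ge: "u \<ge> p \<Longrightarrow> ev p r c u = 0"
  unfolding ev_def by simp

lemma ev_vsub:
  assumes "p > 0"
  shows "ev p r (vsub p c d) = vsub p (ev p r c) (ev p r d)"
proof
  fix u show "ev p r (vsub p c d) u = vsub p (ev p r c) (ev p r d) u"
  proof (cases "u < p")
    case False then show ?thesis by (simp add: ev_ge vsub_zero_zero)
  next
    case True
    have "int (ev p r (vsub p c d) u) = (\<Sum>i<r. int (vsub p c d i) * int u ^ i) mod int p"
      using int_ev[OF True] by (simp add: poly_cpoly)
    also have "\<dots> = (\<Sum>i<r. ((int (c i) - int (d i)) mod int p) * int u ^ i) mod int p"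
      using int_vsub[OF assms] by simp
    also have "\<dots> = (\<Sum>i<r. (int (c i) - int (d i)) * int u ^ i) mod int p"
      by (rule sum_mod_coeff)
    also have "\<dots> = ((\<Sum>i<r. int (c i) * int u ^ i) - (\<Sum>i<r. int (d i) * int u ^ i)) mod int p"
      by (simp add: sum_subtractf left_diff_distrib)
    also have "\<dots> = ((\<Sum>i<r. int (c i) * int u ^ i) mod int p - (\<Sum>i<r. int (d i) * int u ^ i) mod int p) mod int p"
      by (simp add: mod_diff_eq)
    also have "\<dots> = (int (ev p r c u) - int (ev p r d u)) mod int p"
      using int_ev[OF True] by (simp add: poly_cpoly)
    also have "\<dots> = int (vsub p (ev p r c) (ev p r d) u)"
      using int_vsub[OF assms] by simp
    finally show ?thesis by simp
  qed
qed

lemma RS_vsub: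
  assumes "p > 0" "u \<in> RS p r" "v \<in> RS p r"
  shows "vsub p u v \<in> RS p r"
proof -
  obtain c where c: "\<forall>i. c i < p" "u = ev p r c" using assms(2) unfolding RS_def by auto
  obtain d where d: "\<forall>i. d i < p" "v = ev p r d" using assms(3) unfolding RS_def by auto
  have "vsub p u v = ev p r (vsub p c d)" using ev_vsub[OF assms(1)] c d by simp
  moreover have "\<forall>i. vsub p c d i < p" using vsub_lt assms(1) by blast
  ultimately show ?thesis unfolding RS_def by blast
qed

lemma RS_lt: "p > 0 \<Longrightarrow> u \<in> RS p r \<Longrightarrow> u i < p"
  unfolding RS_def using ev_lt by auto

lemma RS_ge: "u \<in> RS p r \<Longrightarrow> i \<ge> p \<Longrightarrow> u i = 0"
  unfolding RS_def using ev_ge by auto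


lemma ev_trunc: "ev p r (trunc r c) = ev p r c"
  unfolding ev_def trunc_def by auto

lemma RS_obtain:
  assumes "u \<in> RS p r" "p > 0"
  obtains c where "c \<in> vecs p {..<r}" "u = ev p r c"
proof -
  obtain c where c: "\<forall>i. c i < p" "u = ev p r c" using assms unfolding RS_def by blast
  have "trunc r c \<in> vecs p {..<r}" using c assms unfolding vecs_def trunc_def by auto
  then show ?thesis using that c ev_trunc by metis
qed

lemma vecs_RS:
  assumes "c \<in> vecs p {..<r}" "p > 0"
  shows "ev p r c \<in> RS p r"
proof -
  have "\<forall>i. c i < p"
  proof
    fix i show "c i < p" by (cases "i < r") (use assms in \<open>auto simp: vecs_def\<close>)
  qed
  then show ?thesis unfolding RS_def by blast
qed

lemma ev_extend:
  assumes "k \<le> l" "c \<in> vecs p {..<k}"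
  shows "ev p k c = ev p l c"
proof -
  have "(\<Sum>i<k. c i * u ^ i) = (\<Sum>i<l. c i * u ^ i)" for u
    by (rule sum.mono_neutral_left) (use assms in \<open>auto simp: vecs_def\<close>)
  then show ?thesis unfolding ev_def by presburger
qed

lemma vecs_mono:
  assumes "c \<in> vecs p {..<k}" "k \<le> l" "p > 0"
  shows "c \<in> vecs p {..<l}"
proof -
  have "c i < p" if "i < l" for i by (cases "i < k") (use assms in \<open>auto simp: vecs_def\<close>)
  moreover have "c i = 0" if "\<not> i < l" for i using assms that by (auto simp: vecs_def)
  ultimately show ?thesis unfolding vecs_def by auto
qed

lemma vecs_eq_image:
  "vecs p S = restr S ` (PiE S (\<lambda>_. {..<p}))"
proof
  show "vecs p S \<subseteq> restr S ` (PiE S (\<lambda>_. {..<p}))"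
  proof
    fix x assume x: "x \<in> vecs p S"
    have "restrict x S \<in> PiE S (\<lambda>_. {..<p})" using x unfolding vecs_def by auto
    moreover have "x = restr S (restrict x S)" using x unfolding vecs_def restr_def by auto
    ultimately show "x \<in> restr S ` (PiE S (\<lambda>_. {..<p}))" by blast
  qed
  show "restr S ` (PiE S (\<lambda>_. {..<p})) \<subseteq> vecs p S"
    unfolding vecs_def restr_def by (auto simp: PiE_iff)
qed

lemma inj_restr_PiE: "inj_on (restr S) (PiE S T)"
proof (rule inj_onI)
  fix f g assume "f \<in> PiE S T" "g \<in> PiE S T" "restr S f = restr S g"
  then have "\<forall>i\<in>S. f i = g i" unfolding restr_def by (metis (full_types))
  then show "f = g" using PiE_ext \<open>f \<in> PiE S T\<close> \<open>g \<in> PiE S T\<close> by blast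
qed

lemma card_vecs: "finite S \<Longrightarrow> card (vecs p S) = p ^ card S"
  unfolding vecs_eq_image using inj_restr_PiE
  by (simp add: card_image card_PiE)

lemma finite_vecs: "finite S \<Longrightarrow> finite (vecs p S)"
  unfolding vecs_eq_image by (simp add: finite_PiE)

lemma uniq_RS:
  assumes "prime p" "finite R" "R \<subseteq> {0..<p}" "r \<le> card R"
    "u \<in> RS p r" "u' \<in> RS p r" "restr R u = restr R u'"
  shows "u = u'"
proof -
  have p: "p > 0" using assms prime_gt_0_nat by blast
  obtain c where c: "c \<in> vecs p {..<r}" "u = ev p r c" using RS_obtain assms(5) p by blast
  obtain c' where c': "c' \<in> vecs p {..<r}" "u' = ev p r c'" using RS_obtain assms(6) p by blast
  have "c = c'" using inj_ev[OF assms(1-4)] c c' assms(7) by (simp add: inj_on_def)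
  then show ?thesis using c c' by simp
qed



lemma sum_collapse:
  assumes "finite I" "i \<in> I" "\<forall>j\<in>I - {i}. f j = (0::nat)"
  shows "sum f I = f i"
  using assms by (simp add: sum.remove)

lemma prime_prod_small:
  fixes x y p :: nat
  assumes "prime p" "p dvd x * y" "0 < x" "x < p" "y < p"
  shows "y = 0"
proof (rule ccontr)
  assume "y \<noteq> 0"
  have "p dvd x \<or> p dvd y" using assms prime_dvd_mult_iff by blast
  moreover have "\<not> p dvd x" using assms dvd_imp_le[of p x] by auto
  moreover have "\<not> p dvd y" using assms \<open>y \<noteq> 0\<close> dvd_imp_le[of p y] by auto
  ultimately show False by blast
qed

locale qcode =
  fixes p l k :: nat and A :: "nat set"
  assumes prime: "prime p" and lbound: "3 * l \<le> p + 1" and kl: "k \<le> l"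
    and Asub: "A \<subseteq> {0..<p}" and cardA: "card A = k"
begin

definition "Ac = {0..<p} - A"
definition "CX = SRS p l A"
definition "CZ = SRS p (p - l) A"
definition "D = {x \<in> vecs p Ac. \<forall>w\<in>CZ. p dvd (\<Sum>i\<in>Ac. w i * x i)}"
definition "P = (\<lambda>c. restr Ac (ev p l c)) ` vecs p {..<l}"
definition "ext x = (SOME u. u \<in> RS p l \<and> restr Ac u = x)"
definition "key x = restr A (ext x)"

lemma pgt: "p > 0" using prime prime_gt_0_nat by blast
lemma p2: "p \<ge> 2" using prime prime_ge_2_nat by blast
lemma finA: "finite A" using Asub finite_subset by blast
lemma finAc: "finite Ac" unfolding Ac_def by simp
lemma Ac_sub: "Ac \<subseteq> {0..<p}" unfolding Ac_def by auto
lemma cardAc: "card Ac = p - k"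
  unfolding Ac_def using Asub cardA by (simp add: card_Diff_subset finA)
lemma lk_le: "l + k \<le> p" using lbound kl by (cases "l = 0") auto
lemma l_le: "l \<le> card Ac" using cardAc lk_le by simp
lemma l_lt: "l < p" using lbound p2 by linarith
lemma A_Ac: "i \<in> A \<Longrightarrow> i \<notin> Ac" unfolding Ac_def by auto

lemma SRS_mem:
  "w \<in> SRS p r A \<longleftrightarrow> (\<exists>u. u \<in> RS p r \<and> (\<forall>i\<in>A. u i = 0) \<and> w = restr Ac u)"
  unfolding SRS_def Ac_def by blast

lemma restr_ev_vecs: "restr Ac (ev p r c) \<in> vecs p Ac"
  unfolding vecs_def restr_def using ev_lt pgt by auto

lemma SRS_vecs: "w \<in> SRS p r A \<Longrightarrow> w \<in> vecs p Ac"
  unfolding SRS_mem vecs_def restr_def using RS_lt pgt by auto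

lemma exists_sep:
  assumes "r \<le> p" "B' \<subseteq> Ac" "i \<in> Ac" "i \<notin> B'" "k + card B' < r"
  shows "\<exists>w\<in>SRS p r A. (\<forall>j\<in>B'. w j = 0) \<and> 0 < w i \<and> w i < p"
proof -
  define B where "B = A \<union> B'"
  have finB': "finite B'" using assms finAc finite_subset by blast
  have "card B = k + card B'" unfolding B_def using assms finA finB' cardA
    by (subst card_Un_disjoint) (auto simp: Ac_def)
  then have cB: "card B < r" using assms by simp
  have finB: "finite B" unfolding B_def using finA finB' by simp
  have Bsub: "B \<subseteq> {0..<p}" unfolding B_def using Asub assms Ac_sub by auto
  obtain d where d: "d \<in> vecs p {..<r}" "\<forall>u\<in>B. ev p r d u = 0" "\<forall>u<p. u \<notin> B \<longrightarrow> ev p r d u \<noteq> 0"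
    using vanish_poly'[OF prime finB Bsub cB] by blast
  define w where "w = restr Ac (ev p r d)"
  have "w \<in> SRS p r A" unfolding SRS_mem w_def
    using vecs_RS[OF d(1) pgt] d(2) B_def by blast
  moreover have "\<forall>j\<in>B'. w j = 0" unfolding w_def restr_def using d(2) B_def by auto
  moreover have "i \<notin> B" unfolding B_def using assms A_Ac by auto
  then have "0 < w i" unfolding w_def restr_def using d(3) assms Ac_sub by auto
  moreover have "w i < p" unfolding w_def restr_def using ev_lt pgt by auto
  ultimately show ?thesis by blast
qed

lemma sum_Ac_full:
  fixes u x :: "nat \<Rightarrow> nat"
  assumes "\<forall>i\<in>A. u i = 0"
  shows "(\<Sum>i\<in>Ac. u i * x i) = (\<Sum>i<p. u i * x i)"
  by (rule sum.mono_neutral_left) (use assms in \<open>auto simp: Ac_def\<close>)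

lemma P_sub_D: "c \<in> vecs p {..<l} \<Longrightarrow> restr Ac (ev p l c) \<in> D"
proof -
  assume c: "c \<in> vecs p {..<l}"
  define x where "x = restr Ac (ev p l c)"
  have "p dvd (\<Sum>i\<in>Ac. w i * x i)" if w: "w \<in> CZ" for w
  proof -
    obtain u where u: "u \<in> RS p (p - l)" "\<forall>i\<in>A. u i = 0" "w = restr Ac u"
      using w unfolding CZ_def SRS_mem by blast
    obtain d where d: "u = ev p (p - l) d" using u(1) unfolding RS_def by blast
    have "(\<Sum>i\<in>Ac. w i * x i) = (\<Sum>i\<in>Ac. u i * ev p l c i)"
      unfolding x_def u(3) restr_def by simp
    also have "\<dots> = (\<Sum>i<p. u i * ev p l c i)" using sum_Ac_full u(2) by blast
    finally have "int (\<Sum>i\<in>Ac. w i * x i) = (\<Sum>i<p. int (ev p l c i) * int (ev p (p - l) d i))"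
      unfolding d by (simp add: mult.commute)
    moreover have "int p dvd (\<Sum>i<p. int (ev p l c i) * int (ev p (p - l) d i))"
      using ortho[OF prime, of l "p - l"] l_lt by simp
    ultimately show ?thesis by (metis int_dvd_int_iff)
  qed
  then show ?thesis unfolding D_def x_def using restr_ev_vecs by blast
qed

lemma CX_sub_P: "v \<in> CX \<Longrightarrow> v \<in> P"
proof -
  assume "v \<in> CX"
  then obtain u where u: "u \<in> RS p l" "v = restr Ac u" unfolding CX_def SRS_mem by blast
  obtain c where "c \<in> vecs p {..<l}" "u = ev p l c" using RS_obtain[OF u(1) pgt] by blast
  then show "v \<in> P" unfolding P_def u(2) by blast
qed

lemma P_sub_D': "P \<subseteq> D" unfolding P_def using P_sub_D by blast

lemma CX_sub_D: "v \<in> CX \<Longrightarrow> v \<in> D" using CX_sub_P P_sub_D' by blast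

lemma D_vecs: "D \<subseteq> vecs p Ac" unfolding D_def by blast

lemma finite_D: "finite D" using D_vecs finite_vecs[OF finAc] finite_subset by blast

lemma sum_vsub_mod:
  "int (\<Sum>i\<in>Ac. w i * vsub p x v i) mod int p
   = (int (\<Sum>i\<in>Ac. w i * x i) - int (\<Sum>i\<in>Ac. w i * v i)) mod int p"
proof -
  have "int (\<Sum>i\<in>Ac. w i * vsub p x v i) = (\<Sum>i\<in>Ac. ((int (x i) - int (v i)) mod int p) * int (w i))"
    using int_vsub[OF pgt] by (simp add: mult.commute)
  then have "int (\<Sum>i\<in>Ac. w i * vsub p x v i) mod int p = (\<Sum>i\<in>Ac. (int (x i) - int (v i)) * int (w i)) mod int p"
    using sum_mod_coeff[of "\<lambda>i. int (x i) - int (v i)" "int p" "\<lambda>i. int (w i)" Ac] by simp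
  also have "(\<Sum>i\<in>Ac. (int (x i) - int (v i)) * int (w i)) = int (\<Sum>i\<in>Ac. w i * x i) - int (\<Sum>i\<in>Ac. w i * v i)"
    by (simp add: algebra_simps sum_subtractf)
  finally show ?thesis .
qed

lemma dvd_vsub_iff:
  assumes "p dvd (\<Sum>i\<in>Ac. w i * v i)"
  shows "p dvd (\<Sum>i\<in>Ac. w i * vsub p x v i) \<longleftrightarrow> p dvd (\<Sum>i\<in>Ac. w i * x i)"
proof -
  have "int (\<Sum>i\<in>Ac. w i * v i) mod int p = 0" using assms
    by (metis dvd_eq_mod_eq_0 int_dvd_int_iff)
  then have "int (\<Sum>i\<in>Ac. w i * vsub p x v i) mod int p = int (\<Sum>i\<in>Ac. w i * x i) mod int p"
    using sum_vsub_mod by (metis diff_zero mod_diff_right_eq)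
  then show ?thesis by (metis dvd_eq_mod_eq_0 int_dvd_int_iff)
qed

lemma D_vsub_iff:
  assumes "x \<in> vecs p Ac" "v \<in> D"
  shows "vsub p x v \<in> D \<longleftrightarrow> x \<in> D"
proof -
  have vv: "v \<in> vecs p Ac" using assms D_vecs by blast
  have "vsub p x v \<in> vecs p Ac" using vsub_vecs[OF pgt assms(1) vv] .
  moreover have "\<forall>w\<in>CZ. p dvd (\<Sum>i\<in>Ac. w i * v i)" using assms(2) unfolding D_def by blast
  ultimately show ?thesis unfolding D_def using assms(1) dvd_vsub_iff by auto
qed

end



context qcode
begin

lemma D_zero:
  assumes z: "z \<in> D" and L: "L \<subseteq> Ac" "card L = l" and zL: "\<forall>i\<in>L. z i = 0"
  shows "\<forall>i\<in>Ac. z i = 0"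
proof
  fix i assume i: "i \<in> Ac"
  show "z i = 0"
  proof (cases "i \<in> L")
    case True then show ?thesis using zL by blast
  next
    case False
    define B' where "B' = Ac - L - {i}"
    have finL: "finite L" using L finAc finite_subset by blast
    have "card (Ac - L) = card Ac - l" using L finL by (simp add: card_Diff_subset)
    moreover have "i \<in> Ac - L" using i False by blast
    ultimately have cB': "card B' = card Ac - l - 1" unfolding B'_def
      by (simp add: card_Diff_singleton finAc)
    have "card (Ac - L) > 0" using \<open>i \<in> Ac - L\<close> finAc by (metis card_gt_0_iff empty_iff finite_Diff)
    then have "k + card B' < p - l" using cB' cardAc \<open>card (Ac - L) = card Ac - l\<close> kl by linarith
    then obtain w where w: "w \<in> SRS p (p - l) A" "\<forall>j\<in>B'. w j = 0" "0 < w i" "w i < p"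
      using exists_sep[of "p - l" B' i] i unfolding B'_def by auto
    have "p dvd (\<Sum>j\<in>Ac. w j * z j)" using z w(1) unfolding D_def CZ_def by blast
    moreover have "(\<Sum>j\<in>Ac. w j * z j) = w i * z i"
      by (rule sum_collapse) (use finAc i w(2) zL B'_def in auto)
    moreover have "z i < p" using z i D_vecs unfolding vecs_def by blast
    ultimately show ?thesis using prime_prod_small[OF prime _ w(3) w(4)] by auto
  qed
qed

lemma card_D_le: "card D \<le> p ^ l"
proof -
  obtain L where L: "L \<subseteq> Ac" "card L = l" "finite L"
    using obtain_subset_with_card_n[OF l_le] by blast
  have "inj_on (restr L) D"
  proof (rule inj_onI)
    fix x y assume x: "x \<in> D" and y: "y \<in> D" and e: "restr L x = restr L y"
    have xv: "x \<in> vecs p Ac" and yv: "y \<in> vecs p Ac" using x y D_vecs by auto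
    have xlt: "x i < p" for i using xv unfolding vecs_def using pgt by (cases "i \<in> Ac") auto
    have ylt: "y i < p" for i using yv unfolding vecs_def using pgt by (cases "i \<in> Ac") auto
    have zD: "vsub p x y \<in> D" using D_vsub_iff[OF xv y] x by blast
    have "\<forall>i\<in>L. vsub p x y i = 0"
    proof
      fix i assume "i \<in> L"
      then have "x i = y i" using e unfolding restr_def by metis
      then show "vsub p x y i = 0" using vsub_same[of p x i, OF pgt xlt] by (simp add: vsub_def)
    qed
    then have "\<forall>i\<in>Ac. vsub p x y i = 0" using D_zero[OF zD L(1,2)] by blast
    then have "\<forall>i\<in>Ac. x i = y i" using vsub_zero_imp_eq[of p x _ y, OF pgt xlt ylt] by blast
    moreover have "\<forall>i. i \<notin> Ac \<longrightarrow> x i = y i" using xv yv unfolding vecs_def by auto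
    ultimately show "x = y" by blast
  qed
  moreover have "restr L ` D \<subseteq> vecs p L"
    using D_vecs L(1) pgt unfolding vecs_def restr_def by fastforce
  ultimately have "card D \<le> card (vecs p L)"
    using card_inj_on_le finite_vecs[OF L(3)] by blast
  then show ?thesis using card_vecs[OF L(3)] L(2) by simp
qed

lemma card_P: "card P = p ^ l"
proof -
  have "inj_on (\<lambda>c. restr Ac (ev p l c)) (vecs p {..<l})"
    using inj_ev[OF prime finAc Ac_sub l_le] .
  then show ?thesis unfolding P_def by (simp add: card_image card_vecs)
qed

lemma D_eq_P: "D = P"
  using card_seteq[OF finite_D P_sub_D'] card_D_le card_P by simp

lemma D_ext: "x \<in> D \<Longrightarrow> ext x \<in> RS p l \<and> restr Ac (ext x) = x"
proof -
  assume "x \<in> D"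
  then obtain c where c: "c \<in> vecs p {..<l}" "x = restr Ac (ev p l c)" unfolding D_eq_P P_def by blast
  then have "\<exists>u. u \<in> RS p l \<and> restr Ac u = x" using vecs_RS[OF c(1) pgt] by blast
  then show ?thesis unfolding ext_def by (rule someI_ex)
qed

lemma ext_eq: "x \<in> D \<Longrightarrow> u \<in> RS p l \<Longrightarrow> restr Ac u = x \<Longrightarrow> ext x = u"
  using D_ext uniq_RS[OF prime finAc Ac_sub l_le] by metis

lemma key_vecs: "x \<in> D \<Longrightarrow> key x \<in> vecs p A"
proof -
  assume "x \<in> D"
  then have "ext x \<in> RS p l" using D_ext by blast
  then have "ext x i < p" for i using RS_lt[OF pgt] by blast
  then show ?thesis unfolding key_def vecs_def restr_def by auto
qed

lemma K1:
  assumes "x \<in> D" "y \<in> D" "key x = key y"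
  shows "vsub p x y \<in> CX"
proof -
  obtain u where u: "u \<in> RS p l" "restr Ac u = x" using D_ext assms(1) by blast
  obtain u' where u': "u' \<in> RS p l" "restr Ac u' = y" using D_ext assms(2) by blast
  have ee: "ext x = u" "ext y = u'" using ext_eq assms u u' by auto
  have "vsub p u u' \<in> RS p l" using RS_vsub[OF pgt u(1) u'(1)] .
  moreover have "\<forall>i\<in>A. vsub p u u' i = 0"
  proof
    fix i assume i: "i \<in> A"
    have "u i = u' i" using assms(3) i unfolding key_def ee restr_def by metis
    then show "vsub p u u' i = 0" using vsub_same[of p u i, OF pgt RS_lt[OF pgt u(1)]] by (simp add: vsub_def)
  qed
  moreover have "vsub p x y = restr Ac (vsub p u u')" using u u' restr_vsub by metis
  ultimately show ?thesis unfolding CX_def SRS_mem by blast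
qed

lemma K2:
  assumes "x \<in> D" "v \<in> CX"
  shows "vsub p x v \<in> D \<and> key (vsub p x v) = key x"
proof -
  have xv: "x \<in> vecs p Ac" using assms D_vecs by blast
  have sD: "vsub p x v \<in> D" using D_vsub_iff[OF xv CX_sub_D[OF assms(2)]] assms(1) by blast
  obtain u where u: "u \<in> RS p l" "restr Ac u = x" using D_ext assms(1) by blast
  obtain uv where uv: "uv \<in> RS p l" "\<forall>i\<in>A. uv i = 0" "v = restr Ac uv"
    using assms(2) unfolding CX_def SRS_mem by blast
  have ex: "ext x = u" using ext_eq assms(1) u by blast
  have "restr Ac (vsub p u uv) = vsub p x v" using u uv restr_vsub by metis
  then have ev: "ext (vsub p x v) = vsub p u uv" using ext_eq[OF sD RS_vsub[OF pgt u(1) uv(1)]] by blast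
  have "vsub p u uv i = u i" if "i \<in> A" for i
    using vsub_right0[of p u i uv, OF pgt RS_lt[OF pgt u(1)]] uv(2) that by auto
  then have "key (vsub p x v) = key x"
    unfolding key_def ev ex restr_def by auto
  then show ?thesis using sD by blast
qed

lemma K3: "card (key ` D) = p ^ k"
proof -
  define Q where "Q = (\<lambda>c. restr A (ev p k c)) ` vecs p {..<k}"
  have cQ: "card Q = p ^ k"
  proof -
    have "inj_on (\<lambda>c. restr A (ev p k c)) (vecs p {..<k})"
      using inj_ev[OF prime finA Asub] cardA by simp
    then show ?thesis unfolding Q_def by (simp add: card_image card_vecs)
  qed
  have "Q \<subseteq> key ` D"
  proof
    fix q assume "q \<in> Q"
    then obtain c where c: "c \<in> vecs p {..<k}" "q = restr A (ev p k c)" unfolding Q_def by blast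
    have cl: "c \<in> vecs p {..<l}" using vecs_mono[OF c(1) kl pgt] .
    define x where "x = restr Ac (ev p l c)"
    have xD: "x \<in> D" unfolding x_def using P_sub_D[OF cl] .
    have "ext x = ev p l c" using ext_eq[OF xD vecs_RS[OF cl pgt]] x_def by simp
    then have "key x = q" unfolding key_def c(2) using ev_extend[OF kl c(1)] by simp
    then show "q \<in> key ` D" using xD by blast
  qed
  moreover have "key ` D \<subseteq> vecs p A" using key_vecs by blast
  moreover have "finite (vecs p A)" using finite_vecs[OF finA] .
  ultimately have "card Q \<le> card (key ` D)" "card (key ` D) \<le> card (vecs p A)"
    by (auto intro: card_mono finite_subset)
  then show ?thesis using cQ card_vecs[OF finA] cardA by simp
qed

end



lemma sum_fun_apply: "(sum f A) x = (\<Sum>a\<in>A. f a x)"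
  by (induction A rule: infinite_finite_induct) (auto simp: plus_fun_def zero_fun_def)

lemma code_space_iff:
  "\<psi> \<in> code_space p S G \<longleftrightarrow> \<psi> \<in> hilb p S \<and> (\<forall>g\<in>G. g \<psi> = \<psi>)"
proof
  assume a: "\<psi> \<in> code_space p S G"
  have "g \<psi> = \<psi>" if "g \<in> G" for g
  proof -
    have "g \<circ> id \<in> gen_group G" using gen_mult[OF that gen_id] .
    then show ?thesis using a unfolding code_space_def by fastforce
  qed
  then show "\<psi> \<in> hilb p S \<and> (\<forall>g\<in>G. g \<psi> = \<psi>)" using a unfolding code_space_def by blast
next
  assume a: "\<psi> \<in> hilb p S \<and> (\<forall>g\<in>G. g \<psi> = \<psi>)"
  have "h \<psi> = \<psi>" if "h \<in> gen_group G" for h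
    using that by (induction rule: gen_group.induct) (use a in auto)
  then show "\<psi> \<in> code_space p S G" using a unfolding code_space_def by blast
qed

lemma Zop_fix_iff:
  assumes "\<psi> \<in> hilb p S" "p > 0"
  shows "Zop p S w \<psi> = \<psi> \<longleftrightarrow> (\<forall>x. \<psi> x \<noteq> 0 \<longrightarrow> p dvd (\<Sum>i\<in>S. w i * x i))"
proof
  assume e: "Zop p S w \<psi> = \<psi>"
  show "\<forall>x. \<psi> x \<noteq> 0 \<longrightarrow> p dvd (\<Sum>i\<in>S. w i * x i)"
  proof (intro allI impI)
    fix x assume nz: "\<psi> x \<noteq> 0"
    then have xv: "x \<in> vecs p S" using assms unfolding hilb_def by blast
    have "omega p ^ (\<Sum>i\<in>S. w i * x i) * \<psi> x = \<psi> x"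
      using fun_cong[OF e, of x] xv unfolding Zop_def by simp
    then have "omega p ^ (\<Sum>i\<in>S. w i * x i) = 1" using nz by simp
    then show "p dvd (\<Sum>i\<in>S. w i * x i)" using omega_pow_eq_1[OF assms(2)] by blast
  qed
next
  assume h: "\<forall>x. \<psi> x \<noteq> 0 \<longrightarrow> p dvd (\<Sum>i\<in>S. w i * x i)"
  show "Zop p S w \<psi> = \<psi>"
  proof
    fix x show "Zop p S w \<psi> x = \<psi> x"
    proof (cases "\<psi> x = 0")
      case True then show ?thesis unfolding Zop_def by simp
    next
      case False
      then have "x \<in> vecs p S" using assms unfolding hilb_def by blast
      moreover have "omega p ^ (\<Sum>i\<in>S. w i * x i) = 1"
        using h False omega_pow_eq_1[OF assms(2)] by blast
      ultimately show ?thesis unfolding Zop_def by simp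
    qed
  qed
qed

lemma Xop_fix_iff:
  assumes "\<psi> \<in> hilb p S"
  shows "Xop p S v \<psi> = \<psi> \<longleftrightarrow> (\<forall>x\<in>vecs p S. \<psi> (vsub p x v) = \<psi> x)"
proof
  assume e: "Xop p S v \<psi> = \<psi>"
  show "\<forall>x\<in>vecs p S. \<psi> (vsub p x v) = \<psi> x"
    using e unfolding Xop_def by (metis (mono_tags, lifting))
next
  assume h: "\<forall>x\<in>vecs p S. \<psi> (vsub p x v) = \<psi> x"
  show "Xop p S v \<psi> = \<psi>"
    using h assms unfolding Xop_def hilb_def by auto
qed

definition delta :: "(nat \<Rightarrow> nat) \<Rightarrow> state" where
  "delta y = (\<lambda>x. if x = y then 1 else 0)"

lemma zero_vecs: "(\<lambda>_. 0) \<in> vecs p S \<longleftrightarrow> p > 0 \<or> S = {}"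
  unfolding vecs_def by auto

lemma vecs_lt: "x \<in> vecs p S \<Longrightarrow> p > 0 \<Longrightarrow> x i < p"
  unfolding vecs_def by (cases "i \<in> S") auto

lemma delta_hilb: "y \<in> vecs p S \<Longrightarrow> delta y \<in> hilb p S"
  unfolding hilb_def delta_def by auto

lemma Zop_delta:
  "y \<in> vecs p S \<Longrightarrow> Zop p S w (delta y) = (\<lambda>x. if x = y then omega p ^ (\<Sum>i\<in>S. w i * y i) else 0)"
  unfolding Zop_def delta_def by auto

lemma Zop_delta0:
  assumes "p > 0"
  shows "Zop p S w (delta (\<lambda>_. 0)) = delta (\<lambda>_. 0)"
proof
  fix x show "Zop p S w (delta (\<lambda>_. 0)) x = delta (\<lambda>_. 0) x"
    using assms zero_vecs[of p S] unfolding Zop_def delta_def by auto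
qed

lemma vsub_eq_zero_iff:
  assumes "p > 0" "x \<in> vecs p S" "v \<in> vecs p S"
  shows "vsub p x v = (\<lambda>_. 0) \<longleftrightarrow> x = v"
proof
  assume "vsub p x v = (\<lambda>_. 0)"
  then show "x = v" using vsub_zero_imp_eq[of p x _ v, OF assms(1) vecs_lt[OF assms(2,1)] vecs_lt[OF assms(3,1)]]
    by (metis ext)
next
  assume "x = v"
  then show "vsub p x v = (\<lambda>_. 0)" using vsub_same[of p x, OF assms(1) vecs_lt[OF assms(2,1)]] by auto
qed

lemma Xop_delta0:
  assumes "p > 0" "v \<in> vecs p S"
  shows "Xop p S v (delta (\<lambda>_. 0)) = delta v"
proof
  fix x show "Xop p S v (delta (\<lambda>_. 0)) x = delta v x"
    using vsub_eq_zero_iff[OF assms(1) _ assms(2), of x] assms(2)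
    unfolding Xop_def delta_def by auto
qed

lemma Xop_zero:
  assumes "\<psi> \<in> hilb p S" "p > 0"
  shows "Xop p S (\<lambda>_. 0) \<psi> = \<psi>"
proof -
  have "vsub p x (\<lambda>_. 0) = x" if "x \<in> vecs p S" for x
    using vsub_right0[of p x _ "\<lambda>_. 0", OF assms(2) vecs_lt[OF that assms(2)]] by auto
  then show ?thesis using assms unfolding Xop_def hilb_def by auto
qed

lemma Zop_zero:
  assumes "\<psi> \<in> hilb p S"
  shows "Zop p S (\<lambda>_. 0) \<psi> = \<psi>"
  using assms unfolding Zop_def hilb_def by auto

lemma Zop_hilb: "Zop p S b \<psi> \<in> hilb p S"
  unfolding Zop_def hilb_def by auto



context qcode
begin

definition "G0 = css_gens p Ac CX CZ"

lemma V_iff: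
  "\<psi> \<in> code_space p Ac G0 \<longleftrightarrow> \<psi> \<in> hilb p Ac \<and> (\<forall>x. \<psi> x \<noteq> 0 \<longrightarrow> x \<in> D)
     \<and> (\<forall>v\<in>CX. \<forall>x\<in>vecs p Ac. \<psi> (vsub p x v) = \<psi> x)"
proof -
  have g: "(\<forall>g\<in>G0. g \<psi> = \<psi>) \<longleftrightarrow> (\<forall>v\<in>CX. Xop p Ac v \<psi> = \<psi>) \<and> (\<forall>w\<in>CZ. Zop p Ac w \<psi> = \<psi>)"
    unfolding G0_def css_gens_def by blast
  show ?thesis
  proof (cases "\<psi> \<in> hilb p Ac")
    case False then show ?thesis using code_space_iff by blast
  next
    case True
    have z1: "(\<forall>w\<in>CZ. Zop p Ac w \<psi> = \<psi>) \<longleftrightarrow> (\<forall>w\<in>CZ. \<forall>x. \<psi> x \<noteq> 0 \<longrightarrow> p dvd (\<Sum>i\<in>Ac. w i * x i))"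
      using Zop_fix_iff[OF True pgt] by simp
    have hv: "\<psi> x \<noteq> 0 \<Longrightarrow> x \<in> vecs p Ac" for x using True unfolding hilb_def by blast
    have z: "(\<forall>w\<in>CZ. Zop p Ac w \<psi> = \<psi>) \<longleftrightarrow> (\<forall>x. \<psi> x \<noteq> 0 \<longrightarrow> x \<in> D)"
      unfolding z1 D_def using hv by auto
    have x: "(\<forall>v\<in>CX. Xop p Ac v \<psi> = \<psi>) \<longleftrightarrow> (\<forall>v\<in>CX. \<forall>x\<in>vecs p Ac. \<psi> (vsub p x v) = \<psi> x)"
      using Xop_fix_iff[OF True] by blast
    have "\<psi> \<in> code_space p Ac G0 \<longleftrightarrow> (\<forall>g\<in>G0. g \<psi> = \<psi>)" using code_space_iff True by blast
    then show ?thesis unfolding g z x using True by blast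
  qed
qed

definition "e s = (\<lambda>x. if x \<in> D \<and> key x = s then 1 else 0 :: complex)"
definition "rep s = (SOME x. x \<in> D \<and> key x = s)"

lemma rep: "s \<in> key ` D \<Longrightarrow> rep s \<in> D \<and> key (rep s) = s"
proof -
  assume "s \<in> key ` D"
  then have "\<exists>x. x \<in> D \<and> key x = s" by blast
  then show ?thesis unfolding rep_def by (rule someI_ex)
qed

lemma e_in_V: "e s \<in> code_space p Ac G0"
proof -
  have "e s \<in> hilb p Ac" unfolding hilb_def e_def using D_vecs by auto
  moreover have "\<forall>x. e s x \<noteq> 0 \<longrightarrow> x \<in> D" unfolding e_def by auto
  moreover have "e s (vsub p x v) = e s x" if v: "v \<in> CX" and x: "x \<in> vecs p Ac" for v x
  proof (cases "x \<in> D")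
    case True then show ?thesis using K2[OF True v] unfolding e_def by simp
  next
    case False
    then have "vsub p x v \<notin> D" using D_vsub_iff[OF x CX_sub_D[OF v]] by blast
    then show ?thesis using False unfolding e_def by simp
  qed
  ultimately show ?thesis using V_iff by blast
qed

lemma V_const:
  assumes "\<psi> \<in> code_space p Ac G0" "x \<in> D" "y \<in> D" "key x = key y"
  shows "\<psi> y = \<psi> x"
proof -
  have c: "vsub p x y \<in> CX" using K1[OF assms(2-4)] .
  have xv: "x \<in> vecs p Ac" and yv: "y \<in> vecs p Ac" using assms D_vecs by auto
  have "\<psi> (vsub p x (vsub p x y)) = \<psi> x" using V_iff assms(1) c xv by blast
  moreover have "vsub p x (vsub p x y) = y"
    using vsub_vsub[of p x _ y, OF pgt vecs_lt[OF xv pgt] vecs_lt[OF yv pgt]] by (simp add: fun_eq_iff)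
  ultimately show ?thesis by simp
qed

lemma dim_code: "cdim (code_space p Ac G0) = p ^ k"
proof -
  interpret vs: vector_space "\<lambda>(c::complex) (\<psi>::state). (\<lambda>x. c * \<psi> x)"
    by unfold_locales (simp_all add: fun_eq_iff algebra_simps plus_fun_def)
  define V where "V = code_space p Ac G0"
  define K where "K = key ` D"
  define B where "B = e ` K"
  have finK: "finite K" unfolding K_def using finite_D by simp
  have inj: "inj_on e K"
  proof (rule inj_onI)
    fix s s' assume s: "s \<in> K" and s': "s' \<in> K" and ee: "e s = e s'"
    have r: "rep s \<in> D" "key (rep s) = s" using rep s unfolding K_def by auto
    have "e s (rep s) = 1" using r unfolding e_def by simp
    then have "e s' (rep s) = 1" using ee by simp
    then show "s = s'" using r unfolding e_def by (auto split: if_splits)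
  qed
  have cardB: "card B = p ^ k" unfolding B_def using card_image[OF inj] K3 K_def by simp
  have BV: "B \<subseteq> V" unfolding B_def V_def using e_in_V by blast
  have ex: "e s x = (if s = key x then 1 else 0)" if "x \<in> D" for s x
    using that unfolding e_def by auto
  have span: "V \<subseteq> vs.span B"
  proof
    fix \<psi> assume psi: "\<psi> \<in> V"
    define f where "f = (\<Sum>s\<in>K. (\<lambda>x. \<psi> (rep s) * e s x))"
    have "f \<in> vs.span B" unfolding f_def
    proof (rule vs.span_sum)
      fix s assume "s \<in> K"
      then have "e s \<in> vs.span B" unfolding B_def by (intro vs.span_base) blast
      then show "(\<lambda>x. \<psi> (rep s) * e s x) \<in> vs.span B" by (rule vs.span_scale)
    qed
    moreover have "\<psi> = f"
    proof
      fix x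
      have fx: "f x = (\<Sum>s\<in>K. \<psi> (rep s) * e s x)" unfolding f_def sum_fun_apply by simp
      show "\<psi> x = f x"
      proof (cases "x \<in> D")
        case True
        have "f x = (\<Sum>s\<in>K. if s = key x then \<psi> (rep s) else 0)"
          unfolding fx using ex[OF True] by (intro sum.cong) auto
        also have "\<dots> = \<psi> (rep (key x))" using True finK unfolding K_def by (simp add: sum.delta')
        also have "\<dots> = \<psi> x"
        proof -
          have "key x \<in> key ` D" using True by blast
          from rep[OF this] show ?thesis
            using V_const[OF psi[unfolded V_def] True] by metis
        qed
        finally show ?thesis by simp
      next
        case False
        then have "\<psi> x = 0" using psi V_iff unfolding V_def by blast
        moreover have "e s x = 0" for s using False unfolding e_def by simp
        ultimately show ?thesis unfolding fx by simp
      qed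
    qed
    ultimately show "\<psi> \<in> vs.span B" by simp
  qed
  have indep: "vs.independent B"
    unfolding vs.independent_explicit_module
  proof (intro allI impI)
    fix t c b assume ft: "finite t" and tB: "t \<subseteq> B" and sum0: "(\<Sum>v\<in>t. (\<lambda>x. c v * v x)) = 0" and b: "b \<in> t"
    obtain s where s: "s \<in> K" "b = e s" using b tB unfolding B_def by blast
    define x0 where "x0 = rep s"
    have x0: "x0 \<in> D" "key x0 = s" using rep s unfolding K_def x0_def by auto
    have vx: "v x0 = (if v = b then 1 else 0)" if vt: "v \<in> t" for v
    proof -
      obtain s' where s': "s' \<in> K" "v = e s'" using vt tB unfolding B_def by blast
      show ?thesis
      proof (cases "s' = s")
        case True then show ?thesis using s s' x0 ex by simp
      next
        case False
        then have "v \<noteq> b" using inj s s' by (metis inj_on_eq_iff)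
        then show ?thesis using s' x0 ex False by simp
      qed
    qed
    have "0 = (\<Sum>v\<in>t. (\<lambda>x. c v * v x)) x0" using sum0 by simp
    also have "\<dots> = (\<Sum>v\<in>t. c v * v x0)" by (simp add: sum_fun_apply)
    also have "\<dots> = (\<Sum>v\<in>t. if v = b then c v else 0)" by (intro sum.cong refl) (simp add: vx)
    also have "\<dots> = c b" using b ft by (simp add: sum.delta')
    finally show "c b = 0" by simp
  qed
  have "vs.dim V = p ^ k" using vs.dim_unique[OF BV span indep cardB] .
  then show ?thesis unfolding cdim_def V_def .
qed

end



context qcode
begin

lemma Zop_gen: "w \<in> CZ \<Longrightarrow> Zop p Ac w \<in> gen_group G0"
  using gen_mult[OF _ gen_id, of "Zop p Ac w" G0] unfolding G0_def css_gens_def by auto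

lemma Xop_gen: "v \<in> CX \<Longrightarrow> Xop p Ac v \<in> gen_group G0"
  using gen_mult[OF _ gen_id, of "Xop p Ac v" G0] unfolding G0_def css_gens_def by auto

lemma distance:
  assumes lp: "logical_pauli p Ac G0 a b"
  shows "l - k \<le> pweight Ac a b"
proof (rule ccontr)
  assume "\<not> l - k \<le> pweight Ac a b"
  then have small: "pweight Ac a b < l - k" by simp
  have av: "a \<in> vecs p Ac" and bv: "b \<in> vecs p Ac" using lp unfolding logical_pauli_def by auto
  have comm: "\<And>g \<psi>. g \<in> gen_group G0 \<Longrightarrow> \<psi> \<in> hilb p Ac \<Longrightarrow> pauli p Ac a b (g \<psi>) = g (pauli p Ac a b \<psi>)"
    using lp unfolding logical_pauli_def by blast
  have notph: "\<not> (\<exists>c g. cmod c = 1 \<and> g \<in> gen_group G0 \<and>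
            (\<forall>\<psi> \<in> hilb p Ac. pauli p Ac a b \<psi> = (\<lambda>x. c * g \<psi> x)))"
    using lp unfolding logical_pauli_def by blast
  define T where "T = {i\<in>Ac. a i \<noteq> 0 \<or> b i \<noteq> 0}"
  have finT: "finite T" unfolding T_def using finAc by simp
  have cT: "card T < l - k" using small unfolding pweight_def T_def by simp
  have TAc: "T \<subseteq> Ac" unfolding T_def by auto
  define z0 :: "nat \<Rightarrow> nat" where "z0 = (\<lambda>_. 0)"
  have z0v: "z0 \<in> vecs p Ac" unfolding z0_def using zero_vecs pgt by blast
  have d0: "delta z0 \<in> hilb p Ac" using delta_hilb[OF z0v] .
  have sep: "\<exists>w\<in>SRS p r A. (\<forall>j\<in>T - {i}. w j = 0) \<and> 0 < w i \<and> w i < p"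
    if i: "i \<in> T" and r: "r \<le> p" "l \<le> r" for i r
  proof -
    have "card (T - {i}) = card T - 1" using i finT by simp
    moreover have "card T > 0" using i finT card_gt_0_iff by blast
    ultimately have "k + card (T - {i}) < r" using cT r by linarith
    then show ?thesis using exists_sep[of r "T - {i}" i] r i TAc by auto
  qed
  have a0: "\<forall>i\<in>Ac. a i = 0"
  proof (rule ccontr)
    assume "\<not> (\<forall>i\<in>Ac. a i = 0)"
    then obtain i where i: "i \<in> Ac" "a i \<noteq> 0" by blast
    then have iT: "i \<in> T" unfolding T_def by blast
    have "l \<le> p - l" using lbound by linarith
    then obtain w where w: "w \<in> CZ" "\<forall>j\<in>T - {i}. w j = 0" "0 < w i" "w i < p"
      using sep[OF iT, of "p - l"] unfolding CZ_def by auto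
    have "pauli p Ac a b (Zop p Ac w (delta z0)) = Zop p Ac w (pauli p Ac a b (delta z0))"
      using comm[OF Zop_gen[OF w(1)] d0] .
    moreover have "Zop p Ac w (delta z0) = delta z0" unfolding z0_def using Zop_delta0[OF pgt] .
    moreover have pd: "pauli p Ac a b (delta z0) = delta a"
      unfolding pauli_def z0_def using Zop_delta0[OF pgt] Xop_delta0[OF pgt av] by (simp add: z0_def)
    ultimately have "delta a = Zop p Ac w (delta a)" by simp
    then have "delta a a = Zop p Ac w (delta a) a" by simp
    then have "omega p ^ (\<Sum>j\<in>Ac. w j * a j) = 1" using Zop_delta[OF av] unfolding delta_def by simp
    then have "p dvd (\<Sum>j\<in>Ac. w j * a j)" using omega_pow_eq_1[OF pgt] by blast
    moreover have "(\<Sum>j\<in>Ac. w j * a j) = w i * a i"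
      by (rule sum_collapse) (use finAc i w(2) in \<open>auto simp: T_def\<close>)
    moreover have "a i < p" using vecs_lt[OF av pgt] .
    ultimately show False using prime_prod_small[OF prime _ w(3) w(4)] i by auto
  qed
  then have az: "a = z0" using av unfolding vecs_def z0_def by auto
  have pz: "pauli p Ac a b \<psi> = Zop p Ac b \<psi>" if "\<psi> \<in> hilb p Ac" for \<psi>
    unfolding pauli_def az z0_def using Xop_zero[OF Zop_hilb pgt] by simp
  have b0: "\<forall>i\<in>Ac. b i = 0"
  proof (rule ccontr)
    assume "\<not> (\<forall>i\<in>Ac. b i = 0)"
    then obtain i where i: "i \<in> Ac" "b i \<noteq> 0" by blast
    then have iT: "i \<in> T" unfolding T_def by blast
    obtain v where v: "v \<in> CX" "\<forall>j\<in>T - {i}. v j = 0" "0 < v i" "v i < p"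
      using sep[OF iT, of l] l_lt unfolding CX_def by auto
    have vv: "v \<in> vecs p Ac" using v(1) SRS_vecs unfolding CX_def by blast
    have "pauli p Ac a b (Xop p Ac v (delta z0)) = Xop p Ac v (pauli p Ac a b (delta z0))"
      using comm[OF Xop_gen[OF v(1)] d0] .
    moreover have "Xop p Ac v (delta z0) = delta v" unfolding z0_def using Xop_delta0[OF pgt vv] .
    moreover have "pauli p Ac a b (delta v) = Zop p Ac b (delta v)" using pz delta_hilb[OF vv] by blast
    moreover have "pauli p Ac a b (delta z0) = delta z0" using pz[OF d0] Zop_delta0[OF pgt] z0_def by simp
    moreover have "Xop p Ac v (delta z0) = delta v" unfolding z0_def using Xop_delta0[OF pgt vv] .
    ultimately have "Zop p Ac b (delta v) = delta v" by simp
    then have "Zop p Ac b (delta v) v = delta v v" by simp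
    then have "omega p ^ (\<Sum>j\<in>Ac. b j * v j) = 1" using Zop_delta[OF vv] unfolding delta_def by simp
    then have "p dvd (\<Sum>j\<in>Ac. b j * v j)" using omega_pow_eq_1[OF pgt] by blast
    moreover have "\<forall>j\<in>Ac - {i}. b j * v j = 0"
    proof
      fix j assume j: "j \<in> Ac - {i}"
      show "b j * v j = 0"
      proof (cases "b j = 0")
        case False
        then have "j \<in> T - {i}" using j unfolding T_def by auto
        then show ?thesis using v(2) by simp
      qed simp
    qed
    then have "(\<Sum>j\<in>Ac. b j * v j) = b i * v i"
      by (rule sum_collapse[OF finAc i(1)])
    ultimately have "p dvd v i * b i" by (simp add: mult.commute)
    moreover have "b i < p" using vecs_lt[OF bv pgt] .
    ultimately have "b i = 0" using prime_prod_small[OF prime _ v(3) v(4)] by blast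
    then show False using i by simp
  qed
  then have bz: "b = z0" using bv unfolding vecs_def z0_def by auto
  have "\<forall>\<psi>\<in>hilb p Ac. pauli p Ac a b \<psi> = (\<lambda>x. 1 * id \<psi> x)"
  proof
    fix \<psi> assume h: "\<psi> \<in> hilb p Ac"
    have "pauli p Ac a b \<psi> = Zop p Ac z0 \<psi>" using pz[OF h] bz by simp
    also have "\<dots> = \<psi>" unfolding z0_def using Zop_zero[OF h] .
    finally show "pauli p Ac a b \<psi> = (\<lambda>x. 1 * id \<psi> x)" by simp
  qed
  then have "\<exists>c g. cmod c = 1 \<and> g \<in> gen_group G0 \<and>
            (\<forall>\<psi> \<in> hilb p Ac. pauli p Ac a b \<psi> = (\<lambda>x. c * g \<psi> x))"
    using gen_id[of G0] by (intro exI[of _ 1] exI[of _ id]) simp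
  then show False using notph by blast
qed

end

theorem lemma7:
  fixes p l k :: nat and A :: "nat set"
  assumes "prime p" and "3 * l \<le> p + 1" and "k \<le> l"
    and "A \<subseteq> {0..<p}" and "card A = k"
  defines "Ac \<equiv> {0..<p} - A"
  defines "G \<equiv> css_gens p Ac (SRS p l A) (SRS p (p - l) A)"
  shows "card Ac = p - k
    \<and> cdim (code_space p Ac G) = p ^ k
    \<and> (\<forall>a b. logical_pauli p Ac G a b \<longrightarrow> l - k \<le> pweight Ac a b)"
proof -
  interpret q: qcode p l k A using assms(1-5) by unfold_locales
  have e1: "Ac = q.Ac" unfolding Ac_def q.Ac_def ..
  have e2: "G = q.G0" unfolding G_def q.G0_def q.CX_def q.CZ_def e1 ..
  show ?thesis unfolding e1 e2 using q.cardAc q.dim_code q.distance by blast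
qed



end
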